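(* There exist absolute constants $c_1,c_2>0$ and $N$ such that for every prime power $q$ and all integers $1\le d\le n$ with $q^n\ge N$, $$c_1\frac{q^n}{d}\le \bigl|\{F\in\mathcal{M}_n: \deg P^-(F)\ge d\}\bigr|\le c_2\frac{q^n}{d}.$$
   Context: $q$ is a prime power; $\mathcal{M}_n$ is the set of monic polynomials of degree $n$ in $\mathbb{F}_q[t]$. For monic $F$ of positive degree, $P^-(F)$ denotes a monic irreducible divisor of $F$ of smallest degree. *)

theory Defs
  imports "HOL-Algebra.Polynomial_Divisibility"
begin

text \<open>Polynomials over a field R are the HOL-Algebra list representation
  (coefficients, leading coefficient first), living in poly_ring R.\<close>

definition monic_poly :: "('a, 'b) ring_scheme \<Rightarrow> 'a list \<Rightarrow> bool" where
  "monic_poly R F \<longleftrightarrow> F \<in> carrier (poly_ring R) \<and> F \<noteq> [] \<and> lead_coeff F = \<one>\<^bsub>R\<^esub>"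

definition monic_polys_deg :: "('a, 'b) ring_scheme \<Rightarrow> nat \<Rightarrow> 'a list set" where
  "monic_polys_deg R n = {F. monic_poly R F \<and> degree F = n}"

definition min_irred_factor_deg :: "('a, 'b) ring_scheme \<Rightarrow> 'a list \<Rightarrow> nat" where
  "min_irred_factor_deg R F =
     Min {degree P | P. monic_poly R P \<and> pirreducible\<^bsub>R\<^esub> (carrier R) P \<and> P pdivides\<^bsub>R\<^esub> F}"

end

theory Submission
  imports Defs
begin

context field
begin

lemma UP_pd: "principal_domain (poly_ring R)"
  using univ_poly_is_principal[OF carrier_is_subfield] .

lemma UP_dom: "domain (poly_ring R)"
  using univ_poly_is_domain[OF carrier_is_subring] .

lemma monic_carrier: "monic_poly R F \<Longrightarrow> F \<in> carrier (poly_ring R)"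
  unfolding monic_poly_def by simp

lemma monic_ne: "monic_poly R F \<Longrightarrow> F \<noteq> []"
  unfolding monic_poly_def by simp

lemma monic_one: "monic_poly R [\<one>]"
  unfolding monic_poly_def using univ_poly_carrier[of R "carrier R" "[\<one>]"]
  by (auto simp: polynomial_def)

lemma monic_mult:
  assumes "monic_poly R P" "monic_poly R G"
  shows "monic_poly R (P \<otimes>\<^bsub>poly_ring R\<^esub> G)"
    "degree (P \<otimes>\<^bsub>poly_ring R\<^esub> G) = degree P + degree G"
proof -
  have p: "polynomial (carrier R) P" "polynomial (carrier R) G"
    using assms unfolding monic_poly_def univ_poly_carrier by auto
  have ne: "P \<noteq> []" "G \<noteq> []" using assms by (auto simp: monic_poly_def)
  have m: "P \<otimes>\<^bsub>poly_ring R\<^esub> G = poly_mult P G" by (simp add: univ_poly_mult)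
  have "poly_mult P G \<noteq> []" using poly_mult_integral[OF carrier_is_subring p] ne by auto
  moreover have "lead_coeff (poly_mult P G) = \<one>"
    using poly_mult_lead_coeff[OF carrier_is_subring p ne] assms by (simp add: monic_poly_def)
  moreover have "polynomial (carrier R) (poly_mult P G)"
    using poly_mult_closed[OF carrier_is_subring p] .
  ultimately show "monic_poly R (P \<otimes>\<^bsub>poly_ring R\<^esub> G)"
    unfolding monic_poly_def m univ_poly_carrier by simp
  show "degree (P \<otimes>\<^bsub>poly_ring R\<^esub> G) = degree P + degree G"
    unfolding m using poly_mult_degree_eq[OF carrier_is_subring p] ne by simp
qed

lemma monic_pow:
  assumes "monic_poly R P"
  shows "monic_poly R (P [^]\<^bsub>poly_ring R\<^esub> (j::nat)) \<and> degree (P [^]\<^bsub>poly_ring R\<^esub> j) = j * degree P"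
proof (induction j)
  case 0
  then show ?case using monic_one by (simp add: univ_poly_one)
next
  case (Suc j)
  interpret UP: domain "poly_ring R" by (rule UP_dom)
  have "P [^]\<^bsub>poly_ring R\<^esub> Suc j = P [^]\<^bsub>poly_ring R\<^esub> j \<otimes>\<^bsub>poly_ring R\<^esub> P" by simp
  then show ?case using monic_mult[OF _ assms, of "P [^]\<^bsub>poly_ring R\<^esub> j"] Suc by simp
qed

lemma monic_assoc_eq:
  assumes "monic_poly R P" "monic_poly R Q" "P \<sim>\<^bsub>poly_ring R\<^esub> Q"
  shows "P = Q"
proof -
  interpret UP: domain "poly_ring R" by (rule UP_dom)
  obtain k where k: "k \<in> carrier R - {\<zero>}" "P = [k] \<otimes>\<^bsub>poly_ring R\<^esub> Q"
    using associated_polynomials_iff[OF carrier_is_subfield monic_carrier[OF assms(1)] monic_carrier[OF assms(2)]] assms(3)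
    by blast
  have pk: "polynomial (carrier R) [k]" using k by (auto simp: polynomial_def)
  have pq: "polynomial (carrier R) Q" using assms(2) unfolding monic_poly_def univ_poly_carrier by auto
  have "lead_coeff P = k \<otimes> lead_coeff Q"
    using poly_mult_lead_coeff[OF carrier_is_subring pk pq] monic_ne[OF assms(2)] k(2)
    by (simp add: univ_poly_mult)
  hence "k = \<one>" using assms k by (simp add: monic_poly_def)
  thus ?thesis using k(2) UP.l_one[OF monic_carrier[OF assms(2)]] by (simp add: univ_poly_one)
qed

lemma monic_dvd_obtain:
  assumes "monic_poly R Q" "monic_poly R F" "Q pdivides F"
  obtains G where "monic_poly R G" "F = Q \<otimes>\<^bsub>poly_ring R\<^esub> G"
proof -
  interpret UP: domain "poly_ring R" by (rule UP_dom)
  obtain c where c: "c \<in> carrier (poly_ring R)" "F = Q \<otimes>\<^bsub>poly_ring R\<^esub> c"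
    using assms(3) unfolding pdivides_def by auto
  have "c \<noteq> []" using c monic_ne[OF assms(2)] monic_carrier[OF assms(1)]
    by (metis UP.r_null univ_poly_zero)
  have pq: "polynomial (carrier R) Q" "polynomial (carrier R) c"
    using assms(1) c(1) unfolding monic_poly_def univ_poly_carrier by auto
  have "lead_coeff F = \<one> \<otimes> lead_coeff c"
    using poly_mult_lead_coeff[OF carrier_is_subring pq] monic_ne[OF assms(1)] \<open>c \<noteq> []\<close> c(2) assms(1)
    by (simp add: univ_poly_mult monic_poly_def)
  moreover have "lead_coeff c \<in> carrier R" using pq(2) \<open>c \<noteq> []\<close>
    by (cases c) (auto simp: polynomial_def)
  ultimately have "lead_coeff c = \<one>" using assms(2) by (simp add: monic_poly_def)
  hence "monic_poly R c" using c(1) \<open>c \<noteq> []\<close> by (simp add: monic_poly_def)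
  thus ?thesis using that c(2) by blast
qed

lemma monic_cancel:
  assumes "monic_poly R Q" "G \<in> carrier (poly_ring R)" "G' \<in> carrier (poly_ring R)"
    "Q \<otimes>\<^bsub>poly_ring R\<^esub> G = Q \<otimes>\<^bsub>poly_ring R\<^esub> G'"
  shows "G = G'"
proof -
  interpret UP: domain "poly_ring R" by (rule UP_dom)
  show ?thesis using UP.m_lcancel[of Q G G'] assms monic_carrier[OF assms(1)] monic_ne[OF assms(1)]
    by (simp add: univ_poly_zero)
qed

lemma exists_monic_irred:
  assumes "monic_poly R F" "degree F \<ge> 1"
  shows "\<exists>P. monic_poly R P \<and> pirreducible (carrier R) P \<and> P pdivides F"
proof -
  interpret UP: principal_domain "poly_ring R" by (rule UP_pd)
  have F: "F \<in> carrier (poly_ring R) - {\<zero>\<^bsub>poly_ring R\<^esub>}"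
    using monic_carrier[OF assms(1)] monic_ne[OF assms(1)] univ_poly_zero[of R "carrier R"] by blast
  have "F \<notin> Units (poly_ring R)"
    using univ_poly_units'[OF carrier_is_subfield, of F] assms(2) by linarith
  then obtain b where b: "b \<in> carrier (poly_ring R)" "pirreducible (carrier R) b"
     "b divides\<^bsub>poly_ring R\<^esub> F"
    using UP.exists_irreducible_divisor[OF F] by blast
  have bne: "b \<noteq> []" using pirreducibleE(1)[OF carrier_is_subring b(1,2)] .
  have pb: "polynomial (carrier R) b" using b(1) univ_poly_carrier by blast
  define c where "c = lead_coeff b"
  have c: "c \<in> carrier R" "c \<noteq> \<zero>" using pb bne unfolding c_def polynomial_def
    by (cases b, auto)+
  have ic: "inv c \<in> carrier R" "inv c \<noteq> \<zero>" using c field_Units by auto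
  have cu: "[c] \<in> Units (poly_ring R)" "[inv c] \<in> Units (poly_ring R)"
    using univ_poly_units[OF carrier_is_subfield] c ic by auto
  define P where "P = [inv c] \<otimes>\<^bsub>poly_ring R\<^esub> b"
  have Pc: "P \<in> carrier (poly_ring R)" unfolding P_def using cu b by auto
  have pic: "polynomial (carrier R) [inv c]" using ic by (auto simp: polynomial_def)
  have "lead_coeff P = inv c \<otimes> c"
    using poly_mult_lead_coeff[OF carrier_is_subring pic pb] bne unfolding P_def c_def
    by (simp add: univ_poly_mult)
  hence lP: "lead_coeff P = \<one>" using c field_Units by simp
  have Pne: "P \<noteq> []" using Pc cu b bne unfolding P_def
    by (metis UP.Units_closed UP.integral univ_poly_zero list.distinct(1))
  have bP: "b = [c] \<otimes>\<^bsub>poly_ring R\<^esub> P"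
  proof -
    have "[c] \<otimes>\<^bsub>poly_ring R\<^esub> [inv c] = [\<one>]"
      using c ic by (simp add: univ_poly_mult field_Units)
    thus ?thesis unfolding P_def using cu b
      by (metis UP.Units_closed UP.l_one UP.m_assoc univ_poly_one)
  qed
  have irr: "pirreducible (carrier R) P"
  proof (rule pirreducibleI[OF carrier_is_subring Pc Pne])
    show "P \<notin> Units (poly_ring R)"
    proof
      assume "P \<in> Units (poly_ring R)"
      hence "b \<in> Units (poly_ring R)" using bP cu by simp
      thus False using pirreducibleE(2)[OF carrier_is_subring b(1,2)] by simp
    qed
  next
    fix x y assume xy: "x \<in> carrier (poly_ring R)" "y \<in> carrier (poly_ring R)"
      "P = x \<otimes>\<^bsub>poly_ring R\<^esub> y"
    have "b = ([c] \<otimes>\<^bsub>poly_ring R\<^esub> x) \<otimes>\<^bsub>poly_ring R\<^esub> y"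
      using bP xy UP.Units_closed[OF cu(1)] by (simp add: UP.m_assoc)
    hence "[c] \<otimes>\<^bsub>poly_ring R\<^esub> x \<in> Units (poly_ring R) \<or> y \<in> Units (poly_ring R)"
      using pirreducibleE(3)[OF carrier_is_subring b(1,2), of "[c] \<otimes>\<^bsub>poly_ring R\<^esub> x" y] xy UP.Units_closed[OF cu(1)] by auto
    thus "x \<in> Units (poly_ring R) \<or> y \<in> Units (poly_ring R)"
    proof
      assume u: "[c] \<otimes>\<^bsub>poly_ring R\<^esub> x \<in> Units (poly_ring R)"
      have "x = [inv c] \<otimes>\<^bsub>poly_ring R\<^esub> ([c] \<otimes>\<^bsub>poly_ring R\<^esub> x)"
      proof -
        have "[inv c] \<otimes>\<^bsub>poly_ring R\<^esub> [c] = [\<one>]"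
          using c ic by (simp add: univ_poly_mult field_Units)
        thus ?thesis using cu xy
          by (metis UP.Units_closed UP.l_one UP.m_assoc univ_poly_one)
      qed
      thus ?thesis using u cu by (metis UP.Units_m_closed)
    qed simp
  qed
  have "P divides\<^bsub>poly_ring R\<^esub> b" using bP cu Pc
    by (metis UP.Units_closed UP.divides_refl UP.divides_prod_l)
  hence "P pdivides F" using b(3) Pc unfolding pdivides_def
    by (meson UP.divides_trans)
  moreover have "monic_poly R P" using Pc Pne lP by (simp add: monic_poly_def)
  ultimately show ?thesis using irr by blast
qed

end

context field
begin

lemma irred_deg: "monic_poly R P \<Longrightarrow> pirreducible (carrier R) P \<Longrightarrow> degree P \<ge> 1"
  using pirreducible_degree[OF carrier_is_subfield monic_carrier] by blast

lemma irred_not_unit: "monic_poly R P \<Longrightarrow> pirreducible (carrier R) P \<Longrightarrow> P \<notin> Units (poly_ring R)"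
  using pirreducibleE(2)[OF carrier_is_subring monic_carrier] by blast

lemma irred_dvd_irred:
  assumes "monic_poly R P" "pirreducible (carrier R) P" "monic_poly R Q" "pirreducible (carrier R) Q"
    "Q pdivides P"
  shows "Q = P"
proof -
  have "Q \<in> Units (poly_ring R) \<or> Q \<sim>\<^bsub>poly_ring R\<^esub> P"
    using divides_pirreducible_condition[OF assms(2) monic_carrier[OF assms(3)]] assms(5)
    unfolding pdivides_def by blast
  thus ?thesis using irred_not_unit[OF assms(3,4)] monic_assoc_eq[OF assms(3,1)] by blast
qed

lemma irred_prime:
  assumes "monic_poly R Q" "pirreducible (carrier R) Q"
    "A \<in> carrier (poly_ring R)" "B \<in> carrier (poly_ring R)"
    "Q pdivides (A \<otimes>\<^bsub>poly_ring R\<^esub> B)"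
  shows "Q pdivides A \<or> Q pdivides B"
proof -
  have "pprime (carrier R) Q"
    using pprime_iff_pirreducible[OF carrier_is_subfield monic_carrier[OF assms(1)]] assms(2) by simp
  thus ?thesis using pprimeE(3)[OF carrier_is_subfield monic_carrier[OF assms(1)]] assms(3-5) by blast
qed

lemma pdiv_trans:
  assumes "A pdivides B" "B pdivides C" "A \<in> carrier (poly_ring R)"
  shows "A pdivides C"
proof -
  interpret UP: domain "poly_ring R" by (rule UP_dom)
  show ?thesis using assms UP.divides_trans unfolding pdivides_def by blast
qed

lemma pdiv_mult_l:
  assumes "A pdivides B" "A \<in> carrier (poly_ring R)" "B \<in> carrier (poly_ring R)" "C \<in> carrier (poly_ring R)"
  shows "A pdivides (C \<otimes>\<^bsub>poly_ring R\<^esub> B)"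
proof -
  interpret UP: domain "poly_ring R" by (rule UP_dom)
  show ?thesis using assms UP.divides_prod_l unfolding pdivides_def by blast
qed

lemma pdiv_mult_r:
  assumes "A pdivides B" "A \<in> carrier (poly_ring R)" "B \<in> carrier (poly_ring R)" "C \<in> carrier (poly_ring R)"
  shows "A pdivides (B \<otimes>\<^bsub>poly_ring R\<^esub> C)"
proof -
  interpret UP: domain "poly_ring R" by (rule UP_dom)
  show ?thesis using assms UP.divides_prod_r unfolding pdivides_def by blast
qed

lemma pdiv_self_mult:
  assumes "A \<in> carrier (poly_ring R)" "C \<in> carrier (poly_ring R)"
  shows "A pdivides (A \<otimes>\<^bsub>poly_ring R\<^esub> C)"
proof -
  interpret UP: domain "poly_ring R" by (rule UP_dom)
  show ?thesis using assms unfolding pdivides_def by (meson UP.divides_refl UP.divides_prod_r)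
qed

lemma irred_dvd_pow:
  assumes "monic_poly R P" "pirreducible (carrier R) P" "monic_poly R Q" "pirreducible (carrier R) Q"
    "Q pdivides (P [^]\<^bsub>poly_ring R\<^esub> (j::nat))"
  shows "Q = P"
  using assms(5)
proof (induction j)
  case 0
  interpret UP: domain "poly_ring R" by (rule UP_dom)
  have "degree Q \<le> degree [\<one>]"
    using pdivides_imp_degree_le[OF carrier_is_subring monic_carrier[OF assms(3)] monic_carrier[OF monic_one]]
      0 by (simp add: univ_poly_one)
  thus ?case using irred_deg[OF assms(3,4)] by simp
next
  case (Suc j)
  interpret UP: domain "poly_ring R" by (rule UP_dom)
  have "Q pdivides (P [^]\<^bsub>poly_ring R\<^esub> j) \<or> Q pdivides P"
    using irred_prime[OF assms(3,4), of "P [^]\<^bsub>poly_ring R\<^esub> j" P] Suc.prems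
      monic_carrier[OF assms(1)] by simp
  thus ?case using Suc.IH irred_dvd_irred[OF assms(1-4)] by blast
qed

lemma pow_suc_dvd_iff:
  assumes "monic_poly R P" "G \<in> carrier (poly_ring R)"
  shows "(P [^]\<^bsub>poly_ring R\<^esub> Suc j) pdivides (P \<otimes>\<^bsub>poly_ring R\<^esub> G)
     \<longleftrightarrow> (P [^]\<^bsub>poly_ring R\<^esub> j) pdivides G"
proof -
  interpret UP: domain "poly_ring R" by (rule UP_dom)
  have Pc: "P \<in> carrier (poly_ring R)" using monic_carrier[OF assms(1)] .
  have Pz: "P \<noteq> \<zero>\<^bsub>poly_ring R\<^esub>" using monic_ne[OF assms(1)] by (simp add: univ_poly_zero)
  have e: "P [^]\<^bsub>poly_ring R\<^esub> Suc j = P \<otimes>\<^bsub>poly_ring R\<^esub> (P [^]\<^bsub>poly_ring R\<^esub> j)"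
    using UP.nat_pow_Suc2[OF Pc] .
  have pc: "P [^]\<^bsub>poly_ring R\<^esub> j \<in> carrier (poly_ring R)" using Pc by simp
  show ?thesis
  proof
    assume "(P [^]\<^bsub>poly_ring R\<^esub> Suc j) pdivides (P \<otimes>\<^bsub>poly_ring R\<^esub> G)"
    then obtain c where c: "c \<in> carrier (poly_ring R)"
      "P \<otimes>\<^bsub>poly_ring R\<^esub> G = (P \<otimes>\<^bsub>poly_ring R\<^esub> (P [^]\<^bsub>poly_ring R\<^esub> j)) \<otimes>\<^bsub>poly_ring R\<^esub> c"
      unfolding pdivides_def e by auto
    hence "P \<otimes>\<^bsub>poly_ring R\<^esub> G = P \<otimes>\<^bsub>poly_ring R\<^esub> ((P [^]\<^bsub>poly_ring R\<^esub> j) \<otimes>\<^bsub>poly_ring R\<^esub> c)"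
      using Pc pc by (simp add: UP.m_assoc)
    moreover have "(P [^]\<^bsub>poly_ring R\<^esub> j) \<otimes>\<^bsub>poly_ring R\<^esub> c \<in> carrier (poly_ring R)"
      using c pc by simp
    ultimately have "G = (P [^]\<^bsub>poly_ring R\<^esub> j) \<otimes>\<^bsub>poly_ring R\<^esub> c"
      using UP.m_lcancel[OF Pz Pc assms(2)] by blast
    thus "(P [^]\<^bsub>poly_ring R\<^esub> j) pdivides G" using c(1) unfolding pdivides_def by blast
  next
    assume "(P [^]\<^bsub>poly_ring R\<^esub> j) pdivides G"
    thus "(P [^]\<^bsub>poly_ring R\<^esub> Suc j) pdivides (P \<otimes>\<^bsub>poly_ring R\<^esub> G)"
      unfolding pdivides_def e using UP.divides_mult_lI Pc pc by blast
  qed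
qed

lemma pow_other_dvd_iff:
  assumes "monic_poly R P" "pirreducible (carrier R) P" "monic_poly R Q" "pirreducible (carrier R) Q"
    "Q \<noteq> P" "G \<in> carrier (poly_ring R)"
  shows "(Q [^]\<^bsub>poly_ring R\<^esub> (j::nat)) pdivides (P \<otimes>\<^bsub>poly_ring R\<^esub> G)
     \<longleftrightarrow> (Q [^]\<^bsub>poly_ring R\<^esub> j) pdivides G"
proof -
  have "\<not> Q pdivides P" using irred_dvd_irred[OF assms(1-4)] assms(5) by blast
  thus ?thesis using pirreducible_pow_pdivides_iff[OF carrier_is_subfield monic_carrier[OF assms(3)]
      monic_carrier[OF assms(1)] assms(6) assms(4)] by blast
qed

lemma pow_dvd_imp_dvd:
  assumes "monic_poly R P" "(P [^]\<^bsub>poly_ring R\<^esub> (j::nat)) pdivides F" "j \<ge> 1"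
  shows "P pdivides F"
proof -
  interpret UP: domain "poly_ring R" by (rule UP_dom)
  have Pc: "P \<in> carrier (poly_ring R)" using monic_carrier[OF assms(1)] .
  obtain i where j: "j = Suc i" using assms(3) by (cases j) auto
  have "P pdivides (P [^]\<^bsub>poly_ring R\<^esub> j)"
    unfolding j UP.nat_pow_Suc2[OF Pc] by (rule pdiv_self_mult[OF Pc]) (simp add: Pc)
  thus ?thesis using pdiv_trans assms(2) Pc by blast
qed

lemma monic_dvd_deg:
  assumes "monic_poly R P" "monic_poly R F" "P pdivides F"
  shows "degree P \<le> degree F"
  using pdivides_imp_degree_le[OF carrier_is_subring monic_carrier[OF assms(1)] monic_carrier[OF assms(2)]
     monic_ne[OF assms(2)]] assms(3) .

end

locale ffield = field + assumes fin: "finite (carrier R)"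

context field
begin

definition Dset :: "'a list \<Rightarrow> ('a list \<times> nat) set" where
  "Dset F = {(P,j). monic_poly R P \<and> pirreducible (carrier R) P \<and> 0 < j \<and>
       (P [^]\<^bsub>poly_ring R\<^esub> j) pdivides F}"

lemma mon_eq: "monic_polys_deg R m = (\<lambda>xs. \<one> # xs) ` {xs. set xs \<subseteq> carrier R \<and> length xs = m}"
proof (intro equalityI subsetI)
  fix F assume "F \<in> monic_polys_deg R m"
  hence F: "monic_poly R F" "degree F = m" unfolding monic_polys_deg_def by auto
  then obtain a xs where axs: "F = a # xs" unfolding monic_poly_def by (cases F) auto
  have "a = \<one>" "set F \<subseteq> carrier R" using F(1) axs unfolding monic_poly_def univ_poly_carrier[symmetric]
      polynomial_def by auto
  thus "F \<in> (\<lambda>xs. \<one> # xs) ` {xs. set xs \<subseteq> carrier R \<and> length xs = m}"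
    using axs F(2) by auto
next
  fix F assume "F \<in> (\<lambda>xs. \<one> # xs) ` {xs. set xs \<subseteq> carrier R \<and> length xs = m}"
  then obtain xs where xs: "F = \<one> # xs" "set xs \<subseteq> carrier R" "length xs = m" by auto
  have "polynomial (carrier R) F" unfolding polynomial_def using xs by auto
  thus "F \<in> monic_polys_deg R m" unfolding monic_polys_deg_def monic_poly_def
    using xs univ_poly_carrier by auto
qed

lemma monic_deg0: "monic_poly R F \<Longrightarrow> degree F = 0 \<Longrightarrow> F = [\<one>]"
  unfolding monic_poly_def by (cases F) auto

end

context ffield
begin

lemma card_mon: "card (monic_polys_deg R m) = card (carrier R) ^ m"
  unfolding mon_eq by (subst card_image) (auto simp: inj_on_def card_lists_length_eq[OF fin])

lemma finite_mon: "finite (monic_polys_deg R m)"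
  unfolding mon_eq using finite_lists_length_eq[OF fin] by blast

lemma finite_mon_le: "finite {P. monic_poly R P \<and> degree P \<le> n}"
proof -
  have "{P. monic_poly R P \<and> degree P \<le> n} = (\<Union>m\<le>n. monic_polys_deg R m)"
    unfolding monic_polys_deg_def by auto
  thus ?thesis using finite_mon by simp
qed

lemma pow_dvd_bound:
  assumes "monic_poly R P" "pirreducible (carrier R) P" "monic_poly R F"
    "(P [^]\<^bsub>poly_ring R\<^esub> (j::nat)) pdivides F"
  shows "j * degree P \<le> degree F" "j \<le> degree F"
proof -
  have "degree (P [^]\<^bsub>poly_ring R\<^esub> j) \<le> degree F"
    using monic_dvd_deg[OF conjunct1[OF monic_pow[OF assms(1)]] assms(3,4)] .
  thus "j * degree P \<le> degree F" using monic_pow[OF assms(1)] by simp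
  moreover have "j \<le> j * degree P" using irred_deg[OF assms(1,2)] by simp
  ultimately show "j \<le> degree F" by linarith
qed

lemma finite_Dset: "monic_poly R F \<Longrightarrow> finite (Dset F)"
proof -
  assume F: "monic_poly R F"
  have "Dset F \<subseteq> {P. monic_poly R P \<and> degree P \<le> degree F} \<times> {..degree F}"
  proof
    fix x assume "x \<in> Dset F"
    then obtain P and j :: nat where x: "x = (P,j)" "monic_poly R P" "pirreducible (carrier R) P" "0 < j"
      "(P [^]\<^bsub>poly_ring R\<^esub> j) pdivides F" unfolding Dset_def by auto
    have "P pdivides F" using pow_dvd_imp_dvd[OF x(2,5)] x(4) by simp
    hence "degree P \<le> degree F" using monic_dvd_deg[OF x(2) F] by simp
    thus "x \<in> {P. monic_poly R P \<and> degree P \<le> degree F} \<times> {..degree F}"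
      using x pow_dvd_bound[OF x(2,3) F x(5)] by auto
  qed
  thus ?thesis using finite_mon_le by (meson finite_SigmaI finite_atMost finite_subset)
qed

lemma factor_sum:
  "monic_poly R F \<Longrightarrow> (\<Sum>x\<in>Dset F. degree (fst x)) = degree F"
proof (induction "degree F" arbitrary: F rule: less_induct)
  case less
  interpret UP: domain "poly_ring R" by (rule UP_dom)
  show ?case
  proof (cases "degree F = 0")
    case True
    have "Dset F = {}"
    proof (rule ccontr)
      assume "Dset F \<noteq> {}"
      then obtain P and j :: nat where x: "monic_poly R P" "pirreducible (carrier R) P" "0 < j"
        "(P [^]\<^bsub>poly_ring R\<^esub> j) pdivides F" unfolding Dset_def by auto
      show False using pow_dvd_bound(2)[OF x(1,2) less.prems x(4)] x(3) True by simp
    qed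
    thus ?thesis using True by simp
  next
    case False
    obtain P where P: "monic_poly R P" "pirreducible (carrier R) P" "P pdivides F"
    proof -
      have "degree F \<ge> 1" using False by linarith
      thus ?thesis using exists_monic_irred[OF less.prems] that by blast
    qed
    obtain G where G: "monic_poly R G" "F = P \<otimes>\<^bsub>poly_ring R\<^esub> G"
      using monic_dvd_obtain[OF P(1) less.prems P(3)] by blast
    have dF: "degree F = degree P + degree G" using monic_mult(2)[OF P(1) G(1)] G(2) by simp
    have dP: "degree P \<ge> 1" using irred_deg[OF P(1,2)] .
    have IH: "(\<Sum>x\<in>Dset G. degree (fst x)) = degree G" using less.hyps[OF _ G(1)] dF dP by simp
    have Pc: "P \<in> carrier (poly_ring R)" and Gc: "G \<in> carrier (poly_ring R)"
      using P(1) G(1) monic_carrier by auto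
    define A where "A = {x\<in>Dset F. fst x \<noteq> P}"
    define B where "B = {x\<in>Dset F. fst x = P}"
    define A' where "A' = {x\<in>Dset G. fst x \<noteq> P}"
    define B' where "B' = {x\<in>Dset G. fst x = P}"
    have AA: "A = A'" unfolding A_def A'_def Dset_def
      using pow_other_dvd_iff[OF P(1,2) _ _ _ Gc] G(2) by auto
    define S where "S = {i::nat. (P [^]\<^bsub>poly_ring R\<^esub> Suc i) pdivides G}"
    have finS: "finite S"
    proof -
      have "S \<subseteq> {..degree G}"
      proof
        fix i assume "i \<in> S"
        hence "Suc i \<le> degree G" unfolding S_def using pow_dvd_bound(2)[OF P(1,2) G(1)] by blast
        thus "i \<in> {..degree G}" by simp
      qed
      thus ?thesis by (rule finite_subset) simp
    qed
    have S0: "{i::nat. (P [^]\<^bsub>poly_ring R\<^esub> i) pdivides G} = insert 0 (Suc ` S)"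
    proof (intro equalityI subsetI)
      fix i assume "i \<in> {i::nat. (P [^]\<^bsub>poly_ring R\<^esub> i) pdivides G}"
      thus "i \<in> insert 0 (Suc ` S)" unfolding S_def by (cases i) auto
    next
      fix i assume "i \<in> insert 0 (Suc ` S)"
      moreover have "(P [^]\<^bsub>poly_ring R\<^esub> (0::nat)) pdivides G"
        using Gc unfolding pdivides_def by (simp add: UP.one_divides)
      ultimately show "i \<in> {i::nat. (P [^]\<^bsub>poly_ring R\<^esub> i) pdivides G}" unfolding S_def by auto
    qed
    have BS: "B = (\<lambda>i. (P, Suc i)) ` {i::nat. (P [^]\<^bsub>poly_ring R\<^esub> i) pdivides G}"
    proof (intro equalityI subsetI)
      fix x assume "x \<in> B"
      then obtain j :: nat where x: "x = (P,j)" "0 < j" "(P [^]\<^bsub>poly_ring R\<^esub> j) pdivides F"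
        unfolding B_def Dset_def by auto
      then obtain i where "j = Suc i" by (cases j) auto
      thus "x \<in> (\<lambda>i. (P, Suc i)) ` {i::nat. (P [^]\<^bsub>poly_ring R\<^esub> i) pdivides G}"
        using x pow_suc_dvd_iff[OF P(1) Gc] G(2) by auto
    next
      fix x assume "x \<in> (\<lambda>i. (P, Suc i)) ` {i::nat. (P [^]\<^bsub>poly_ring R\<^esub> i) pdivides G}"
      then obtain i where "x = (P, Suc i)" "(P [^]\<^bsub>poly_ring R\<^esub> i) pdivides G" by auto
      thus "x \<in> B" unfolding B_def Dset_def using pow_suc_dvd_iff[OF P(1) Gc] G(2) P by auto
    qed
    have BS': "B' = (\<lambda>i. (P, Suc i)) ` S"
    proof (intro equalityI subsetI)
      fix x assume "x \<in> B'"
      then obtain j :: nat where x: "x = (P,j)" "0 < j" "(P [^]\<^bsub>poly_ring R\<^esub> j) pdivides G"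
        unfolding B'_def Dset_def by auto
      then obtain i where "j = Suc i" by (cases j) auto
      thus "x \<in> (\<lambda>i. (P, Suc i)) ` S" using x by (auto simp: S_def)
    next
      fix x assume "x \<in> (\<lambda>i. (P, Suc i)) ` S"
      then obtain i where "x = (P, Suc i)" "(P [^]\<^bsub>poly_ring R\<^esub> Suc i) pdivides G"
        unfolding S_def by auto
      thus "x \<in> B'" unfolding B'_def Dset_def using P by auto
    qed
    have inj: "inj (\<lambda>i. (P, Suc i))" by (auto simp: inj_def)
    have cB: "card B = Suc (card S)"
    proof -
      have "card B = card {i::nat. (P [^]\<^bsub>poly_ring R\<^esub> i) pdivides G}"
        unfolding BS by (rule card_image) (auto simp: inj_on_def)
      also have "\<dots> = card (insert 0 (Suc ` S))" unfolding S0 ..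
      also have "\<dots> = Suc (card (Suc ` S))" using finS by (subst card_insert_disjoint) auto
      also have "card (Suc ` S) = card S" by (rule card_image) auto
      finally show ?thesis .
    qed
    have cB': "card B' = card S"
      unfolding BS' using finS by (simp add: card_image inj_on_def)
    have fF: "finite (Dset F)" and fG: "finite (Dset G)" using finite_Dset less.prems G(1) by auto
    have e1: "(\<Sum>x\<in>Dset F. degree (fst x)) = (\<Sum>x\<in>A. degree (fst x)) + (\<Sum>x\<in>B. degree (fst x))"
      unfolding A_def B_def using fF by (subst sum.union_disjoint[symmetric]) (auto intro: sum.cong)
    have e2: "(\<Sum>x\<in>B. degree (fst x)) = card B * degree P"
      unfolding B_def by simp
    have e3: "(\<Sum>x\<in>Dset G. degree (fst x)) = (\<Sum>x\<in>A'. degree (fst x)) + (\<Sum>x\<in>B'. degree (fst x))"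
      unfolding A'_def B'_def using fG by (subst sum.union_disjoint[symmetric]) (auto intro: sum.cong)
    have e4: "(\<Sum>x\<in>B'. degree (fst x)) = card B' * degree P"
      unfolding B'_def by simp
    show ?thesis using e1 e2 e3 e4 IH AA cB cB' dF by simp
  qed
qed

end

context field
begin

definition rough :: "nat \<Rightarrow> 'a list \<Rightarrow> bool" where
  "rough d F \<longleftrightarrow> (\<forall>P. monic_poly R P \<and> pirreducible (carrier R) P \<and> P pdivides F \<longrightarrow> d \<le> degree P)"

definition Rs :: "nat \<Rightarrow> nat \<Rightarrow> 'a list set" where
  "Rs d m = {F \<in> monic_polys_deg R m. rough d F}"

definition Irr :: "nat \<Rightarrow> 'a list set" where
  "Irr k = {P. monic_poly R P \<and> pirreducible (carrier R) P \<and> degree P = k}"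

lemma rough_pow_mult:
  assumes "monic_poly R P" "pirreducible (carrier R) P" "d \<le> degree P" "G \<in> carrier (poly_ring R)"
  shows "rough d ((P [^]\<^bsub>poly_ring R\<^esub> (j::nat)) \<otimes>\<^bsub>poly_ring R\<^esub> G) \<longleftrightarrow> rough d G"
proof -
  have Pj: "P [^]\<^bsub>poly_ring R\<^esub> j \<in> carrier (poly_ring R)"
    using monic_carrier[OF conjunct1[OF monic_pow[OF assms(1)]]] .
  show ?thesis
  proof
    assume r: "rough d ((P [^]\<^bsub>poly_ring R\<^esub> j) \<otimes>\<^bsub>poly_ring R\<^esub> G)"
    show "rough d G" unfolding rough_def
    proof (intro allI impI)
      fix Q assume Q: "monic_poly R Q \<and> pirreducible (carrier R) Q \<and> Q pdivides G"
      hence "Q pdivides ((P [^]\<^bsub>poly_ring R\<^esub> j) \<otimes>\<^bsub>poly_ring R\<^esub> G)"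
        using pdiv_mult_l[OF _ monic_carrier assms(4) Pj] by blast
      thus "d \<le> degree Q" using r Q unfolding rough_def by blast
    qed
  next
    assume r: "rough d G"
    show "rough d ((P [^]\<^bsub>poly_ring R\<^esub> j) \<otimes>\<^bsub>poly_ring R\<^esub> G)" unfolding rough_def
    proof (intro allI impI)
      fix Q assume Q: "monic_poly R Q \<and> pirreducible (carrier R) Q \<and>
          Q pdivides ((P [^]\<^bsub>poly_ring R\<^esub> j) \<otimes>\<^bsub>poly_ring R\<^esub> G)"
      hence "Q pdivides (P [^]\<^bsub>poly_ring R\<^esub> j) \<or> Q pdivides G"
        using irred_prime[OF _ _ Pj assms(4)] by blast
      thus "d \<le> degree Q"
      proof
        assume "Q pdivides (P [^]\<^bsub>poly_ring R\<^esub> j)"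
        hence "Q = P" using irred_dvd_pow[OF assms(1,2)] Q by blast
        thus ?thesis using assms(3) by simp
      qed (use r Q in \<open>auto simp: rough_def\<close>)
    qed
  qed
qed

end

context ffield
begin

lemma finite_Rs: "finite (Rs d m)"
  unfolding Rs_def using finite_mon by simp

lemma card_Rs_dvd:
  assumes "monic_poly R P" "pirreducible (carrier R) P" "d \<le> degree P" "j * degree P \<le> m"
  shows "card {F \<in> Rs d m. (P [^]\<^bsub>poly_ring R\<^esub> (j::nat)) pdivides F} = card (Rs d (m - j * degree P))"
proof -
  let ?A = "P [^]\<^bsub>poly_ring R\<^esub> j"
  have A: "monic_poly R ?A" "degree ?A = j * degree P" using monic_pow[OF assms(1)] by auto
  have "bij_betw (\<lambda>G. ?A \<otimes>\<^bsub>poly_ring R\<^esub> G) (Rs d (m - j * degree P))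
      {F \<in> Rs d m. ?A pdivides F}"
  proof (rule bij_betw_imageI)
    show "inj_on (\<lambda>G. ?A \<otimes>\<^bsub>poly_ring R\<^esub> G) (Rs d (m - j * degree P))"
    proof (rule inj_onI)
      fix G G' assume G: "G \<in> Rs d (m - j * degree P)" "G' \<in> Rs d (m - j * degree P)"
        "?A \<otimes>\<^bsub>poly_ring R\<^esub> G = ?A \<otimes>\<^bsub>poly_ring R\<^esub> G'"
      have "monic_poly R G" "monic_poly R G'" using G(1,2) unfolding Rs_def monic_polys_deg_def by auto
      thus "G = G'" using monic_cancel[OF A(1) monic_carrier monic_carrier G(3)] by blast
    qed
    show "(\<lambda>G. ?A \<otimes>\<^bsub>poly_ring R\<^esub> G) ` Rs d (m - j * degree P) = {F \<in> Rs d m. ?A pdivides F}"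
    proof (intro equalityI subsetI)
      fix F assume "F \<in> (\<lambda>G. ?A \<otimes>\<^bsub>poly_ring R\<^esub> G) ` Rs d (m - j * degree P)"
      then obtain G where G: "F = ?A \<otimes>\<^bsub>poly_ring R\<^esub> G" "monic_poly R G" "degree G = m - j * degree P"
        "rough d G" unfolding Rs_def monic_polys_deg_def by auto
      have "monic_poly R F" "degree F = m" using monic_mult[OF A(1) G(2)] G A(2) assms(4) by auto
      moreover have "rough d F" using rough_pow_mult[OF assms(1-3) monic_carrier[OF G(2)]] G by simp
      moreover have "?A pdivides F" using pdiv_self_mult[OF monic_carrier[OF A(1)] monic_carrier[OF G(2)]] G(1)
        by simp
      ultimately show "F \<in> {F \<in> Rs d m. ?A pdivides F}" unfolding Rs_def monic_polys_deg_def by simp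
    next
      fix F assume F: "F \<in> {F \<in> Rs d m. ?A pdivides F}"
      hence F': "monic_poly R F" "degree F = m" "rough d F" "?A pdivides F"
        unfolding Rs_def monic_polys_deg_def by auto
      obtain G where G: "monic_poly R G" "F = ?A \<otimes>\<^bsub>poly_ring R\<^esub> G"
        using monic_dvd_obtain[OF A(1) F'(1,4)] by blast
      have "degree G = m - j * degree P" using monic_mult(2)[OF A(1) G(1)] G(2) F'(2) A(2) by simp
      moreover have "rough d G" using rough_pow_mult[OF assms(1-3) monic_carrier[OF G(1)]] G(2) F'(3)
        by simp
      ultimately show "F \<in> (\<lambda>G. ?A \<otimes>\<^bsub>poly_ring R\<^esub> G) ` Rs d (m - j * degree P)"
        using G unfolding Rs_def monic_polys_deg_def by auto
    qed
  qed
  from bij_betw_same_card[OF this] show ?thesis by simp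
qed

lemma ident:
  assumes "0 < d"
  shows "m * card (Rs d m) =
    (\<Sum>k\<in>{d..m}. card (Irr k) * (k * (\<Sum>j\<in>{1..m div k}. card (Rs d (m - j * k)))))"
proof -
  define U where "U = {(P,j). monic_poly R P \<and> pirreducible (carrier R) P \<and> d \<le> degree P \<and> 0 < j \<and> j * degree P \<le> m}"
  define Irs where "Irs = {P. monic_poly R P \<and> pirreducible (carrier R) P \<and> d \<le> degree P \<and> degree P \<le> m}"
  define dv where "dv = (\<lambda>F (x :: 'a list \<times> nat). ((fst x) [^]\<^bsub>poly_ring R\<^esub> (snd x)) pdivides F)"
  have finIrs: "finite Irs" using finite_mon_le[of m] unfolding Irs_def by (rule finite_subset[rotated]) auto
  have USig: "U = Sigma Irs (\<lambda>P. {1..m div degree P})"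
  proof (intro equalityI subsetI)
    fix x assume "x \<in> U"
    then obtain P j where x: "x = (P,j)" "monic_poly R P" "pirreducible (carrier R) P" "d \<le> degree P"
      "0 < j" "j * degree P \<le> m" unfolding U_def by auto
    have dp: "degree P > 0" using irred_deg[OF x(2,3)] by simp
    have "degree P \<le> j * degree P" using x(5) by simp
    hence "degree P \<le> m" using x(6) by linarith
    moreover have "j \<le> m div degree P" using x(6) dp by (simp add: less_eq_div_iff_mult_less_eq)
    ultimately show "x \<in> Sigma Irs (\<lambda>P. {1..m div degree P})" using x unfolding Irs_def by auto
  next
    fix x assume "x \<in> Sigma Irs (\<lambda>P. {1..m div degree P})"
    then obtain P j where x: "x = (P,j)" "P \<in> Irs" "1 \<le> j" "j \<le> m div degree P" by auto
    have dp: "degree P > 0" using irred_deg x(2) unfolding Irs_def by fastforce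
    have "j * degree P \<le> m" using x(4) dp by (simp add: less_eq_div_iff_mult_less_eq)
    thus "x \<in> U" using x unfolding U_def Irs_def by auto
  qed
  have finU: "finite U" unfolding USig using finIrs by simp
  have DU: "Dset F = {x. x \<in> U \<and> dv F x}" if F: "F \<in> Rs d m" for F
  proof (intro equalityI subsetI)
    fix x assume "x \<in> Dset F"
    then obtain P and j :: nat where x: "x = (P,j)" "monic_poly R P" "pirreducible (carrier R) P" "0 < j"
       "(P [^]\<^bsub>poly_ring R\<^esub> j) pdivides F" unfolding Dset_def by auto
    have Fm: "monic_poly R F" "degree F = m" "rough d F" using F unfolding Rs_def monic_polys_deg_def by auto
    have "P pdivides F" using pow_dvd_imp_dvd[OF x(2,5)] x(4) by simp
    hence "d \<le> degree P" using Fm(3) x unfolding rough_def by blast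
    moreover have "j * degree P \<le> m" using pow_dvd_bound(1)[OF x(2,3) Fm(1) x(5)] Fm(2) by simp
    ultimately show "x \<in> {x. x \<in> U \<and> dv F x}" using x unfolding U_def dv_def by auto
  next
    fix x assume "x \<in> {x. x \<in> U \<and> dv F x}"
    thus "x \<in> Dset F" unfolding U_def dv_def Dset_def by auto
  qed
  have "m * card (Rs d m) = (\<Sum>F\<in>Rs d m. degree F)"
    by (simp add: Rs_def monic_polys_deg_def)
  also have "\<dots> = (\<Sum>F\<in>Rs d m. \<Sum>x\<in>Dset F. degree (fst x))"
    by (rule sum.cong[OF refl], rule factor_sum[symmetric]) (simp add: Rs_def monic_polys_deg_def)
  also have "\<dots> = (\<Sum>F\<in>Rs d m. \<Sum>x\<in>{x. x \<in> U \<and> dv F x}. degree (fst x))"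
    by (rule sum.cong[OF refl]) (simp add: DU)
  also have "\<dots> = (\<Sum>x\<in>U. \<Sum>F\<in>{F. F \<in> Rs d m \<and> dv F x}. degree (fst x))"
    by (rule sum.swap_restrict[OF finite_Rs finU])
  also have "\<dots> = (\<Sum>x\<in>U. degree (fst x) * card (Rs d (m - snd x * degree (fst x))))"
  proof (rule sum.cong[OF refl])
    fix x assume "x \<in> U"
    then obtain P j where x: "x = (P,j)" "monic_poly R P" "pirreducible (carrier R) P" "d \<le> degree P"
      "0 < j" "j * degree P \<le> m" unfolding U_def by auto
    have "card {F. F \<in> Rs d m \<and> dv F x} = card (Rs d (m - j * degree P))"
      using card_Rs_dvd[OF x(2,3,4,6)] unfolding dv_def x by simp
    thus "(\<Sum>F\<in>{F. F \<in> Rs d m \<and> dv F x}. degree (fst x)) = degree (fst x) * card (Rs d (m - snd x * degree (fst x)))"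
      using x by simp
  qed
  also have "\<dots> = (\<Sum>P\<in>Irs. \<Sum>j\<in>{1..m div degree P}. degree P * card (Rs d (m - j * degree P)))"
    unfolding USig by (subst sum.Sigma[OF finIrs]) (auto simp: case_prod_beta)
  also have "\<dots> = (\<Sum>k\<in>{d..m}. \<Sum>P\<in>{P. P \<in> Irs \<and> degree P = k}.
       \<Sum>j\<in>{1..m div degree P}. degree P * card (Rs d (m - j * degree P)))"
    by (rule sum.group[symmetric, OF finIrs]) (auto simp: Irs_def)
  also have "\<dots> = (\<Sum>k\<in>{d..m}. card (Irr k) * (k * (\<Sum>j\<in>{1..m div k}. card (Rs d (m - j * k)))))"
  proof (rule sum.cong[OF refl])
    fix k assume k: "k \<in> {d..m}"
    have "{P. P \<in> Irs \<and> degree P = k} = Irr k" using k unfolding Irs_def Irr_def by auto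
    thus "(\<Sum>P\<in>{P. P \<in> Irs \<and> degree P = k}. \<Sum>j\<in>{1..m div degree P}. degree P * card (Rs d (m - j * degree P)))
       = card (Irr k) * (k * (\<Sum>j\<in>{1..m div k}. card (Rs d (m - j * k))))"
      by (simp add: Irr_def sum_distrib_left)
  qed
  finally show ?thesis .
qed

end

lemma geom_half:
  fixes x :: real assumes "0 \<le> x" "x \<le> 1/2"
  shows "(\<Sum>i<n. x^(a+i)) \<le> 2*x^a - 2*x^(a+n)"
proof (induction n)
  case 0 then show ?case by simp
next
  case (Suc n)
  have "x^(a + Suc n) = x * x^(a+n)" by simp
  moreover have "0 \<le> x^(a+n)" using assms by simp
  ultimately have "2 * x^(a + Suc n) \<le> x^(a+n)" using assms
    mult_right_mono[of "2*x" 1 "x^(a+n)"] by simp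
  thus ?case using Suc by simp
qed

lemma geom_half':
  fixes x :: real assumes "0 \<le> x" "x \<le> 1/2"
  shows "(\<Sum>i<n. x^(a+i)) \<le> 2*x^a"
  using geom_half[OF assms, where n=n and a=a] assms by (smt (verit) zero_le_power)

lemma geom_Q:
  fixes Q :: real assumes "Q \<ge> 2"
  shows "(\<Sum>j\<in>{1..t}. Q^j) \<le> 2 * Q^t"
proof (induction t)
  case 0 then show ?case by simp
next
  case (Suc t)
  have "(\<Sum>j\<in>{1..Suc t}. Q^j) = (\<Sum>j\<in>{1..t}. Q^j) + Q^Suc t" by simp
  also have "\<dots> \<le> 2 * Q^t + Q^Suc t" using Suc by simp
  also have "2 * Q^t \<le> Q^Suc t" using assms by (simp add: mult_right_mono)
  finally show ?case by simp
qed

definition EE :: "nat \<Rightarrow> real" where "EE k = 2 * (1/2)^(k - k div 2)"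

lemma EE_nonneg: "0 \<le> EE k" unfolding EE_def by simp

lemma EE_le1: "k \<ge> 1 \<Longrightarrow> EE k \<le> 1"
proof -
  assume "k \<ge> 1"
  hence "k - k div 2 \<ge> 1" by linarith
  hence "(1/2::real)^(k - k div 2) \<le> (1/2)^1" by (rule power_decreasing) auto
  thus "EE k \<le> 1" unfolding EE_def by simp
qed

lemma EE_sum_even: "(\<Sum>k\<in>{1..2*i}. EE k) = 4 - 4 * (1/2)^i"
proof (induction i)
  case 0 then show ?case by simp
next
  case (Suc i)
  have s: "{1..2 * Suc i} = insert (2*i+2) (insert (2*i+1) {1..2*i})" by auto
  have "(\<Sum>k\<in>{1..2*Suc i}. EE k) = EE (2*i+2) + EE (2*i+1) + (\<Sum>k\<in>{1..2*i}. EE k)"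
    unfolding s by simp
  also have "EE (2*i+2) = 2 * (1/2)^(Suc i)" unfolding EE_def
    by (simp add: Suc_diff_le)
  also have "EE (2*i+1) = 2 * (1/2)^(Suc i)" unfolding EE_def
  proof -
    have "(2*i+1) - (2*i+1) div 2 = Suc i" by presburger
    thus "2 * (1 / 2) ^ (2 * i + 1 - (2 * i + 1) div 2) = 2 * (1 / 2::real) ^ Suc i" by simp
  qed
  finally show ?case using Suc by simp
qed

lemma EE_sum: "(\<Sum>k\<in>{1..M}. EE k) \<le> 4"
proof -
  have "(\<Sum>k\<in>{1..M}. EE k) \<le> (\<Sum>k\<in>{1..2*M}. EE k)"
    by (rule sum_mono2) (auto simp: EE_nonneg)
  also have "\<dots> = 4 - 4 * (1/2)^M" by (rule EE_sum_even)
  also have "\<dots> \<le> 4" by simp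
  finally show ?thesis .
qed

lemma EE_bound:
  fixes Q :: real assumes "Q \<ge> 2"
  shows "2 * Q ^ (k div 2) \<le> Q^k * EE k"
proof -
  have t: "k div 2 \<le> k" by simp
  have "Q^k = Q^(k div 2) * Q^(k - k div 2)" using t by (simp add: power_add[symmetric])
  moreover have "(2::real)^(k - k div 2) \<le> Q^(k - k div 2)" using assms by (simp add: power_mono)
  moreover have "EE k = 2 / 2^(k - k div 2)" unfolding EE_def by (simp add: power_divide)
  ultimately have "Q^k * EE k = 2 * Q^(k div 2) * (Q^(k - k div 2) / 2^(k - k div 2))" by simp
  moreover have "Q^(k - k div 2) / 2^(k - k div 2) \<ge> 1"
    using \<open>(2::real)^(k - k div 2) \<le> Q^(k - k div 2)\<close> by simp
  moreover have "0 \<le> 2 * Q^(k div 2)" using assms by simp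
  ultimately show ?thesis by (metis mult_left_mono mult.right_neutral)
qed

lemma h_rec:
  fixes q :: nat assumes "k \<ge> 1"
  shows "(\<Sum>j\<in>{1..Suc m div k}. q^(Suc m - j*k)) =
     q * (\<Sum>j\<in>{1..m div k}. q^(m - j*k)) + (if k dvd Suc m then 1 else 0)"
proof -
  have A: "(\<Sum>j\<in>{1..m div k}. q^(Suc m - j*k)) = q * (\<Sum>j\<in>{1..m div k}. q^(m - j*k))"
    unfolding sum_distrib_left
  proof (rule sum.cong[OF refl])
    fix j assume "j \<in> {1..m div k}"
    hence "j * k \<le> m" using assms by (simp add: less_eq_div_iff_mult_less_eq)
    hence "Suc m - j*k = Suc (m - j*k)" by simp
    thus "q^(Suc m - j*k) = q * q^(m - j*k)" by simp
  qed
  show ?thesis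
  proof (cases "k dvd Suc m")
    case True
    hence d: "Suc m div k = Suc (m div k)" using div_Suc[of m k] by simp
    have e: "Suc (m div k) * k = Suc m" using True d by (metis dvd_div_mult_self)
    have "{1..Suc m div k} = insert (Suc (m div k)) {1..m div k}" unfolding d by auto
    hence "(\<Sum>j\<in>{1..Suc m div k}. q^(Suc m - j*k)) = q^(Suc m - Suc (m div k) * k) + (\<Sum>j\<in>{1..m div k}. q^(Suc m - j*k))"
      by simp
    also have "q^(Suc m - Suc (m div k) * k) = 1" using e by simp
    finally show ?thesis using A True by simp
  next
    case False
    hence d: "Suc m div k = m div k" using div_Suc[of m k] by (auto simp: dvd_eq_mod_eq_0)
    show ?thesis using A False unfolding d by simp
  qed
qed

lemma gauss_abstract:
  fixes q :: nat and I :: "nat \<Rightarrow> nat"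
  assumes ID: "\<And>m. m * q^m = (\<Sum>k\<in>{1..m}. I k * (k * (\<Sum>j\<in>{1..m div k}. q^(m - j*k))))"
    and n: "n \<ge> 1"
  shows "(\<Sum>k\<in>{1..n}. if k dvd n then k * I k else 0) = q^n"
proof -
  obtain m where nm: "n = Suc m" using n by (cases n) auto
  define h where "h = (\<lambda>k m. (\<Sum>j\<in>{1..m div k}. q^(m - j*k)))"
  define XX where "XX = (\<Sum>k\<in>{1..Suc m}. if k dvd Suc m then k * I k else 0)"
  have "Suc m * q^Suc m = (\<Sum>k\<in>{1..Suc m}. I k * (k * h k (Suc m)))"
    using ID[of "Suc m"] unfolding h_def .
  also have "\<dots> = (\<Sum>k\<in>{1..Suc m}. q * (I k * (k * h k m)) + (if k dvd Suc m then k * I k else 0))"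
  proof (rule sum.cong[OF refl])
    fix k assume "k \<in> {1..Suc m}"
    hence "h k (Suc m) = q * h k m + (if k dvd Suc m then 1 else 0)"
      unfolding h_def using h_rec[of k q m] by simp
    thus "I k * (k * h k (Suc m)) = q * (I k * (k * h k m)) + (if k dvd Suc m then k * I k else 0)"
      by (simp add: algebra_simps)
  qed
  also have "\<dots> = q * (\<Sum>k\<in>{1..Suc m}. I k * (k * h k m)) + XX"
    unfolding XX_def by (simp only: sum.distrib sum_distrib_left)
  also have "(\<Sum>k\<in>{1..Suc m}. I k * (k * h k m)) = (\<Sum>k\<in>{1..m}. I k * (k * h k m))"
    by (simp add: h_def)
  also have "\<dots> = m * q^m" using ID[of m] unfolding h_def by simp
  finally have "Suc m * q^Suc m = q * (m * q^m) + XX" .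
  hence "XX = q^Suc m" by (simp add: algebra_simps)
  thus ?thesis unfolding XX_def nm .
qed

lemma kI_le:
  fixes q :: nat and I :: "nat \<Rightarrow> nat"
  assumes G: "\<And>n. n \<ge> 1 \<Longrightarrow> (\<Sum>k\<in>{1..n}. if k dvd n then k * I k else 0) = q^n"
    and k: "k \<ge> 1"
  shows "k * I k \<le> q^k"
proof -
  have "(if k dvd k then k * I k else 0) \<le> (\<Sum>j\<in>{1..k}. if j dvd k then j * I j else 0)"
    by (rule member_le_sum) (use k in auto)
  thus ?thesis using G[OF k] by simp
qed

lemma kI_ge:
  fixes q :: nat and I :: "nat \<Rightarrow> nat"
  assumes G: "\<And>n. n \<ge> 1 \<Longrightarrow> (\<Sum>k\<in>{1..n}. if k dvd n then k * I k else 0) = q^n"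
    and k: "k \<ge> 1"
  shows "q^k \<le> k * I k + (\<Sum>j\<in>{1..k div 2}. q^j)"
proof -
  obtain k' where kk: "k = Suc k'" using k by (cases k) auto
  define g where "g = (\<lambda>j. if j dvd k then j * I j else 0)"
  have "q^k = (\<Sum>j\<in>{1..k}. g j)" using G[OF k] unfolding g_def by simp
  also have "\<dots> = g k + (\<Sum>j\<in>{1..k'}. g j)" unfolding kk by (simp add: atLeastAtMostSuc_conv)
  also have "(\<Sum>j\<in>{1..k'}. g j) \<le> (\<Sum>j\<in>{1..k'}. if j \<in> {..k div 2} then q^j else 0)"
  proof (rule sum_mono)
    fix j assume j: "j \<in> {1..k'}"
    show "g j \<le> (if j \<in> {..k div 2} then q^j else 0)"
    proof (cases "j dvd k")
      case True
      then obtain c where c: "k = j * c" by blast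
      have "c \<noteq> 0" using c kk by (metis mult_0_right nat.simps(3))
      moreover have "c \<noteq> 1" using c j kk by auto
      ultimately
      have "c \<ge> 2" by simp
      hence "j * 2 \<le> k" using c by (metis mult_le_mono2)
      hence "j \<le> k div 2" by (simp add: less_eq_div_iff_mult_less_eq)
      moreover have "j * I j \<le> q^j" using kI_le[OF G] j by simp
      ultimately show ?thesis unfolding g_def using True by simp
    qed (simp add: g_def)
  qed
  also have "\<dots> = (\<Sum>j\<in>{1..k'} \<inter> {..k div 2}. q^j)" by (rule sum.inter_restrict[symmetric]) simp
  also have "{1..k'} \<inter> {..k div 2} = {1..k div 2}" using kk by auto
  finally show ?thesis unfolding g_def by simp
qed

lemma geom_ivl:
  fixes x :: real assumes "0 \<le> x" "x \<le> 1/2"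
  shows "(\<Sum>k\<in>{a..b}. x^k) \<le> 2 * x^a"
proof (cases "a \<le> b")
  case True
  have "(\<Sum>k\<in>{a..b}. x^k) = (\<Sum>i\<in>{0..b-a}. x^(a+i))"
    using sum.atLeastAtMost_shift_0[OF True, of "\<lambda>k. x^k"] by (simp add: comp_def)
  also have "{0..b-a} = {..<Suc (b-a)}" by auto
  also have "(\<Sum>i\<in>{..<Suc (b-a)}. x^(a+i)) \<le> 2 * x^a" by (rule geom_half'[OF assms])
  finally show ?thesis .
next
  case False
  thus ?thesis using assms by simp
qed

lemma term_bd:
  fixes Q :: real
  assumes Q: "Q \<ge> 2" and k: "k \<ge> 1" and j: "j \<ge> 2" and jk: "j * k \<le> m"
  shows "Q^k * Q^(m - j*k) \<le> Q^m * (4 * (1/2)^k * (1/2)^j)"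
proof -
  obtain i where i: "j = i + 2" using j by (metis add.commute le_Suc_ex)
  have kj: "k \<le> j * k" using j by simp
  have e: "m = k + (m - j*k) + (j*k - k)" using jk kj by linarith
  have e2: "j*k - k = (i+1)*k" unfolding i by (simp add: algebra_simps)
  define B where "B = Q^((i+1)*k)"
  have QmAB: "Q^m = Q^k * Q^(m - j*k) * B" unfolding B_def
    by (subst e) (simp add: power_add e2)
  have "i \<le> i * k" using k by simp
  hence ex: "k + j \<le> (i+1)*k + 2" unfolding i by (simp add: algebra_simps)
  have "(2::real)^(k+j) \<le> 2^((i+1)*k + 2)" by (rule power_increasing[OF ex]) simp
  also have "\<dots> = 4 * 2^((i+1)*k)" by (simp add: power_add)
  also have "(2::real)^((i+1)*k) \<le> B" unfolding B_def by (rule power_mono) (use Q in auto)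
  finally have c: "(2::real)^(k+j) \<le> 4 * B" by simp
  have A0: "0 \<le> Q^k * Q^(m - j*k)" using Q by simp
  have "Q^k * Q^(m - j*k) * 2^(k+j) \<le> Q^k * Q^(m - j*k) * (4 * B)"
    using mult_left_mono[OF c A0] .
  hence "Q^k * Q^(m - j*k) \<le> Q^k * Q^(m - j*k) * (4 * B) / 2^(k+j)"
    by (simp add: field_simps)
  also have "\<dots> = Q^m * (4 * (1/2)^k * (1/2)^j)"
    unfolding QmAB by (simp add: power_add field_simps power_one_over)
  finally show ?thesis .
qed

locale abs_setup =
  fixes q :: nat and I :: "nat \<Rightarrow> nat" and \<rho> :: "nat \<Rightarrow> nat" and d :: nat
  assumes q2: "q \<ge> 2" and d1: "d \<ge> 1"
    and G: "\<And>n. n \<ge> 1 \<Longrightarrow> (\<Sum>k\<in>{1..n}. if k dvd n then k * I k else 0) = q^n"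
    and ID: "\<And>m. m * \<rho> m = (\<Sum>k\<in>{d..m}. I k * (k * (\<Sum>j\<in>{1..m div k}. \<rho> (m - j*k))))"
    and R0: "\<rho> 0 = 1"
    and Rle: "\<And>m. \<rho> m \<le> q^m"
begin

abbreviation "Q \<equiv> real q"

lemma Q2: "Q \<ge> 2" using q2 by simp

lemma kIub: assumes "k \<ge> 1" shows "real (k * I k) \<le> Q^k"
proof -
  have "k * I k \<le> q^k" by (rule kI_le[OF G assms])
  hence "real (k * I k) \<le> real (q^k)" by (simp only: of_nat_le_iff)
  thus ?thesis by (simp only: of_nat_power)
qed

lemma kIlb1: assumes "k \<ge> 1" shows "real (k * I k) \<ge> Q^k * (1 - EE k)"
proof -
  have "q^k \<le> k * I k + (\<Sum>j\<in>{1..k div 2}. q^j)" using kI_ge[OF G assms] .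
  hence "real (q^k) \<le> real (k * I k + (\<Sum>j\<in>{1..k div 2}. q^j))" by (simp only: of_nat_le_iff)
  hence "Q^k \<le> real (k * I k) + (\<Sum>j\<in>{1..k div 2}. Q^j)"
    by (simp only: of_nat_add of_nat_sum of_nat_power)
  moreover have "(\<Sum>j\<in>{1..k div 2}. Q^j) \<le> 2 * Q^(k div 2)" using geom_Q[OF Q2] .
  moreover have "2 * Q^(k div 2) \<le> Q^k * EE k" using EE_bound[OF Q2] .
  ultimately show ?thesis by (simp add: algebra_simps)
qed

lemma kIlb2: assumes "k \<ge> 1" shows "real (k * I k) \<ge> Q^k / 2"
proof -
  have "q^k \<le> k * I k + (\<Sum>j\<in>{1..k div 2}. q^j)" using kI_ge[OF G assms] .
  hence "real (q^k) \<le> real (k * I k + (\<Sum>j\<in>{1..k div 2}. q^j))" by (simp only: of_nat_le_iff)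
  hence b: "Q^k \<le> real (k * I k) + (\<Sum>j\<in>{1..k div 2}. Q^j)"
    by (simp only: of_nat_add of_nat_sum of_nat_power)
  consider "k = 1" | "k = 2" | "k \<ge> 3" using assms by linarith
  thus ?thesis
  proof cases
    case 1 thus ?thesis using b Q2 by simp
  next
    case 2
    have "Q^2 \<le> real (k * I k) + Q" using b 2 by simp
    moreover have "Q^2/2 \<ge> Q" using Q2 by (simp add: power2_eq_square)
    ultimately show ?thesis using 2 by simp
  next
    case 3
    have "k - k div 2 \<ge> 2" using 3 by linarith
    hence p: "(1/2::real)^(k - k div 2) \<le> (1/2)^2" by (rule power_decreasing) auto
    have "(1/2::real)^2 = 1/4" by (simp add: power2_eq_square)
    hence "EE k \<le> 1/2" unfolding EE_def using p by linarith
    moreover have "0 \<le> Q^k" using Q2 by simp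
    ultimately have "Q^k * (1/2) \<le> Q^k * (1 - EE k)"
      by (intro mult_left_mono) auto
    hence "Q^k * (1 - EE k) \<ge> Q^k / 2" by simp
    thus ?thesis using kIlb1[OF assms] by simp
  qed
qed

lemma rho_small: "0 < m \<Longrightarrow> m < d \<Longrightarrow> \<rho> m = 0"
  using ID[of m] by simp

lemma IDr: "real m * real (\<rho> m) = (\<Sum>k\<in>{d..m}. real (k * I k) * (\<Sum>j\<in>{1..m div k}. real (\<rho> (m - j*k))))"
proof -
  have "real (m * \<rho> m) = real (\<Sum>k\<in>{d..m}. I k * (k * (\<Sum>j\<in>{1..m div k}. \<rho> (m - j*k))))"
    using ID[of m] by simp
  thus ?thesis by (simp add: algebra_simps)
qed

end

context abs_setup
begin

lemma Qpos: "Q^n > 0" using Q2 by simp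

lemma ub: "m \<ge> 1 \<Longrightarrow> real (\<rho> m) \<le> 5 * Q^m / real d"
proof (induction m rule: less_induct)
  case (less m)
  show ?case
  proof (cases "m < d")
    case True
    thus ?thesis using rho_small less.prems Q2 by simp
  next
    case False
    hence dm: "d \<le> m" by simp
    define T where "T = (\<lambda>k. real (k * I k))"
    define C where "C = 5 * Q^m / real d"
    have dpos: "real d > 0" using d1 by simp
    have T0: "T k \<ge> 0" for k unfolding T_def by simp
    have split: "(\<Sum>j\<in>{1..m div k}. real (\<rho> (m - j*k))) =
        real (\<rho> (m - k)) + (\<Sum>j\<in>{2..m div k}. real (\<rho> (m - j*k)))" if k: "k \<in> {d..m}" for k
    proof -
      have "m div k \<ge> 1" using k d1 by (simp add: less_eq_div_iff_mult_less_eq)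
      hence "{1..m div k} = insert 1 {2..m div k}" by auto
      thus ?thesis by simp
    qed
    have b1: "T k * real (\<rho> (m - k)) \<le> (if k = m then Q^m else 0) + (if k \<in> {d..m-d} then C else 0)"
      if k: "k \<in> {d..m}" for k
    proof -
      have k1: "k \<ge> 1" using k d1 by simp
      consider "k = m" | "k \<le> m - d" "k \<noteq> m" | "m - d < k" "k \<noteq> m" by linarith
      thus ?thesis
      proof cases
        case 1
        have "m - d < m" using d1 dm by simp
        hence "m \<notin> {d..m-d}" by simp
        thus ?thesis using 1 kIub[OF k1] R0 dm unfolding T_def by simp
      next
        case 2
        have mk: "m - k \<ge> d" "m - k < m" "m - k \<ge> 1" using 2 k d1 by auto
        have ih: "real (\<rho> (m - k)) \<le> 5 * Q^(m-k) / real d" using less.IH[OF mk(2) mk(3)] .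
        have "T k * real (\<rho> (m - k)) \<le> Q^k * (5 * Q^(m-k) / real d)"
          by (rule mult_mono) (use kIub[OF k1] ih T0 Q2 in \<open>auto simp: T_def\<close>)
        also have "\<dots> = 5 * (Q^k * Q^(m-k)) / real d" by simp
        also have "Q^k * Q^(m-k) = Q^m" using k by (simp add: power_add[symmetric])
        finally show ?thesis using 2 k unfolding C_def by simp
      next
        case 3
        have "\<rho> (m - k) = 0" using rho_small[of "m - k"] 3 k by auto
        thus ?thesis using 3 by simp
      qed
    qed
    have b2: "T k * (\<Sum>j\<in>{2..m div k}. real (\<rho> (m - j*k))) \<le> Q^m * (2 * (1/2)^k)"
      if k: "k \<in> {d..m}" for k
    proof -
      have k1: "k \<ge> 1" using k d1 by simp
      have "(\<Sum>j\<in>{2..m div k}. real (\<rho> (m - j*k))) \<le> (\<Sum>j\<in>{2..m div k}. Q^(m - j*k))"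
        by (rule sum_mono) (use Rle in \<open>simp add: of_nat_le_iff[symmetric] del: of_nat_le_iff\<close>)
      hence "T k * (\<Sum>j\<in>{2..m div k}. real (\<rho> (m - j*k))) \<le> Q^k * (\<Sum>j\<in>{2..m div k}. Q^(m - j*k))"
        by (intro mult_mono) (use kIub[OF k1] T0 in \<open>auto simp: T_def intro: sum_nonneg\<close>)
      also have "\<dots> = (\<Sum>j\<in>{2..m div k}. Q^k * Q^(m - j*k))" by (simp add: sum_distrib_left)
      also have "\<dots> \<le> (\<Sum>j\<in>{2..m div k}. Q^m * (4 * (1/2)^k * (1/2)^j))"
      proof (rule sum_mono)
        fix j assume j: "j \<in> {2..m div k}"
        hence "j * k \<le> m" using k1 by (simp add: less_eq_div_iff_mult_less_eq)
        thus "Q^k * Q^(m - j*k) \<le> Q^m * (4 * (1/2)^k * (1/2)^j)"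
          using term_bd[OF Q2 k1 _] j by simp
      qed
      also have "\<dots> = Q^m * (4 * (1/2)^k) * (\<Sum>j\<in>{2..m div k}. (1/2)^j)"
        by (simp add: sum_distrib_left mult.assoc)
      also have "\<dots> \<le> Q^m * (4 * (1/2)^k) * (2 * (1/2)^2)"
        by (rule mult_left_mono[OF geom_ivl]) (use Q2 in auto)
      also have "\<dots> = Q^m * (2 * (1/2)^k)" by (simp add: power2_eq_square)
      finally show ?thesis .
    qed
    have "real m * real (\<rho> m) = (\<Sum>k\<in>{d..m}. T k * (\<Sum>j\<in>{1..m div k}. real (\<rho> (m - j*k))))"
      using IDr unfolding T_def .
    also have "\<dots> = (\<Sum>k\<in>{d..m}. T k * real (\<rho> (m - k)) + T k * (\<Sum>j\<in>{2..m div k}. real (\<rho> (m - j*k))))"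
    proof (rule sum.cong[OF refl])
      fix k assume k: "k \<in> {d..m}"
      show "T k * (\<Sum>j\<in>{1..m div k}. real (\<rho> (m - j*k))) =
         T k * real (\<rho> (m - k)) + T k * (\<Sum>j\<in>{2..m div k}. real (\<rho> (m - j*k)))"
        unfolding split[OF k] by (rule distrib_left)
    qed
    also have "\<dots> \<le> (\<Sum>k\<in>{d..m}. ((if k = m then Q^m else 0) + (if k \<in> {d..m-d} then C else 0))
                      + Q^m * (2 * (1/2)^k))"
      by (rule sum_mono) (use b1 b2 in \<open>smt (verit)\<close>)
    also have "\<dots> = Q^m + real (card {d..m-d}) * C + 2 * Q^m * (\<Sum>k\<in>{d..m}. (1/2)^k)"
    proof -
      have "(\<Sum>k\<in>{d..m}. (if k \<in> {d..m-d} then C else 0)) = (\<Sum>k\<in>{d..m} \<inter> {d..m-d}. C)"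
        by (rule sum.inter_restrict[symmetric]) simp
      also have "{d..m} \<inter> {d..m-d} = {d..m-d}" by auto
      finally have e: "(\<Sum>k\<in>{d..m}. (if k \<in> {d..m-d} then C else 0)) = real (card {d..m-d}) * C"
        by simp
      show ?thesis using dm e by (simp add: sum.distrib sum_distrib_left mult_ac)
    qed
    also have "(\<Sum>k\<in>{d..m}. (1/2::real)^k) \<le> 2 * (1/2)^d" by (rule geom_ivl) auto
    also have "(1/2::real)^d \<le> 1 / real d"
    proof -
      have "real d \<le> 2^d" using less_exp[of d] by (metis less_imp_le of_nat_le_iff of_nat_numeral of_nat_power)
      thus ?thesis using dpos by (simp add: power_one_over field_simps)
    qed
    finally have main: "real m * real (\<rho> m) \<le> Q^m + real (card {d..m-d}) * C + 2 * Q^m * (2 * (1 / real d))"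
      using Qpos[of m] by (simp add: mult_left_mono)
    have cnat: "d + 5 * card {d..m-d} + 4 \<le> 5 * m" using dm d1 by simp
    hence creal: "real d + 5 * real (card {d..m-d}) + 4 \<le> 5 * real m"
      by (metis (mono_tags) of_nat_add of_nat_le_iff of_nat_mult of_nat_numeral)
    have "Q^m + real (card {d..m-d}) * C + 2 * Q^m * (2 * (1 / real d))
        = Q^m / real d * (real d + 5 * real (card {d..m-d}) + 4)"
      unfolding C_def using dpos by (simp add: field_simps)
    also have "\<dots> \<le> Q^m / real d * (5 * real m)"
      by (rule mult_left_mono[OF creal]) (use Qpos[of m] dpos in simp)
    finally have h: "real m * real (\<rho> m) \<le> real m * C" using main unfolding C_def by (simp add: field_simps)
    have "real m > 0" using less.prems by simp
    hence "real (\<rho> m) \<le> C" using h by (simp only: mult_le_cancel_left_pos)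
    thus ?thesis unfolding C_def .
  qed
qed

end

context abs_setup
begin

lemma lb: "m \<ge> d \<Longrightarrow> real (\<rho> m) \<ge> Q^m / (12 * real d)"
proof (induction m rule: less_induct)
  case (less m)
  have dm: "d \<le> m" using less.prems .
  define T where "T = (\<lambda>k. real (k * I k))"
  define XX where "XX = Q^m / (12 * real d)"
  have dpos: "real d > 0" using d1 by simp
  have Xpos: "XX > 0" unfolding XX_def using Qpos[of m] dpos by simp
  have T0: "T k \<ge> 0" for k unfolding T_def by simp
  have s0: "real m * real (\<rho> m) = (\<Sum>k\<in>{d..m}. T k * (\<Sum>j\<in>{1..m div k}. real (\<rho> (m - j*k))))"
    using IDr unfolding T_def .
  have s1: "(\<Sum>k\<in>{d..m}. T k * real (\<rho> (m - k))) \<le> (\<Sum>k\<in>{d..m}. T k * (\<Sum>j\<in>{1..m div k}. real (\<rho> (m - j*k))))"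
  proof (rule sum_mono)
    fix k assume k: "k \<in> {d..m}"
    have "m div k \<ge> 1" using k d1 by (simp add: less_eq_div_iff_mult_less_eq)
    hence "real (\<rho> (m - 1*k)) \<le> (\<Sum>j\<in>{1..m div k}. real (\<rho> (m - j*k)))"
      by (intro member_le_sum) auto
    thus "T k * real (\<rho> (m - k)) \<le> T k * (\<Sum>j\<in>{1..m div k}. real (\<rho> (m - j*k)))"
      by (intro mult_left_mono T0) simp
  qed
  have s2: "(\<Sum>k\<in>insert m {d..m-d}. T k * real (\<rho> (m - k))) \<le> (\<Sum>k\<in>{d..m}. T k * real (\<rho> (m - k)))"
    by (rule sum_mono2) (use dm T0 in auto)
  have "m \<notin> {d..m-d}" using d1 dm by auto
  hence s3: "(\<Sum>k\<in>insert m {d..m-d}. T k * real (\<rho> (m - k))) = T m * real (\<rho> 0) + (\<Sum>k\<in>{d..m-d}. T k * real (\<rho> (m - k)))"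
    by simp
  have s4: "T m * real (\<rho> 0) \<ge> Q^m / 2" using kIlb2[of m] dm d1 R0 unfolding T_def by simp
  have s5: "(\<Sum>k\<in>{d..m-d}. T k * real (\<rho> (m - k))) \<ge> (\<Sum>k\<in>{d..m-d}. XX * (1 - EE k))"
  proof (rule sum_mono)
    fix k assume k: "k \<in> {d..m-d}"
    have k1: "k \<ge> 1" using k d1 by simp
    have mk: "m - k \<ge> d" "m - k < m" using k d1 by auto
    have ih: "real (\<rho> (m - k)) \<ge> Q^(m-k) / (12 * real d)" using less.IH[OF mk(2) mk(1)] .
    have e0: "0 \<le> 1 - EE k" using EE_le1[OF k1] by simp
    have "Q^k * (1 - EE k) * (Q^(m-k) / (12 * real d)) \<le> T k * real (\<rho> (m - k))"
      by (rule mult_mono) (use kIlb1[OF k1] ih e0 Qpos[of k] in \<open>auto simp: T_def\<close>)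
    moreover have "Q^k * (1 - EE k) * (Q^(m-k) / (12 * real d)) = XX * (1 - EE k)"
    proof -
      have "k + (m - k) = m" using k by auto
      hence "Q^k * Q^(m-k) = Q^m" by (metis power_add)
      thus ?thesis unfolding XX_def by (simp add: field_simps)
    qed
    ultimately show "XX * (1 - EE k) \<le> T k * real (\<rho> (m - k))" by simp
  qed
  have s6: "(\<Sum>k\<in>{d..m-d}. XX * (1 - EE k)) = XX * (real (card {d..m-d}) - (\<Sum>k\<in>{d..m-d}. EE k))"
    by (simp add: sum_distrib_left sum_subtractf right_diff_distrib)
  have s7: "(\<Sum>k\<in>{d..m-d}. EE k) \<le> 4"
  proof -
    have "(\<Sum>k\<in>{d..m-d}. EE k) \<le> (\<Sum>k\<in>{1..m}. EE k)"
      by (rule sum_mono2) (use d1 EE_nonneg in auto)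
    thus ?thesis using EE_sum[of m] by simp
  qed
  have s8: "XX * (real (card {d..m-d}) - 4) \<le> XX * (real (card {d..m-d}) - (\<Sum>k\<in>{d..m-d}. EE k))"
    by (rule mult_left_mono) (use s7 Xpos in auto)
  have main: "Q^m / 2 + XX * (real (card {d..m-d}) - 4) \<le> real m * real (\<rho> m)"
    using s0 s1 s2 s3 s4 s5 s6 s8 by linarith
  have "real (card {d..m-d}) \<ge> real m + 1 - 2 * real d" using dm by simp
  hence "6 * real d + real (card {d..m-d}) - 4 \<ge> real m" using d1 by simp
  hence "XX * real m \<le> XX * (6 * real d + real (card {d..m-d}) - 4)"
    by (rule mult_left_mono) (use Xpos in simp)
  also have "XX * (6 * real d + real (card {d..m-d}) - 4) = Q^m / 2 + XX * (real (card {d..m-d}) - 4)"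
    unfolding XX_def using dpos by (simp add: field_simps)
  finally have "real m * XX \<le> real m * real (\<rho> m)" using main by (simp add: mult.commute)
  moreover have "real m > 0" using dm d1 by simp
  ultimately have "XX \<le> real (\<rho> m)" by (simp only: mult_le_cancel_left_pos)
  thus ?case unfolding XX_def .
qed

end

context ffield
begin

lemma q_ge2: "card (carrier R) \<ge> 2"
proof -
  have "{\<zero>, \<one>} \<subseteq> carrier R" by auto
  hence "card {\<zero>, \<one>} \<le> card (carrier R)" using fin by (rule card_mono[rotated])
  moreover have "card {\<zero>, \<one>} = 2" using zero_not_one by simp
  ultimately show ?thesis by simp
qed

lemma rough1: "monic_poly R F \<Longrightarrow> rough 1 F"
  unfolding rough_def using irred_deg by blast

lemma Rs1: "Rs 1 m = monic_polys_deg R m"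
  unfolding Rs_def monic_polys_deg_def using rough1 by auto

lemma Rs0: "card (Rs d 0) = 1"
proof -
  have "monic_polys_deg R 0 = {[\<one>]}" unfolding mon_eq by auto
  moreover have "rough d [\<one>]" unfolding rough_def
  proof (intro allI impI)
    fix P assume P: "monic_poly R P \<and> pirreducible (carrier R) P \<and> P pdivides [\<one>]"
    hence "degree P \<le> degree [\<one>]" using monic_dvd_deg[OF _ monic_one] by blast
    thus "d \<le> degree P" using irred_deg P by fastforce
  qed
  ultimately have "Rs d 0 = {[\<one>]}" unfolding Rs_def by auto
  thus ?thesis by simp
qed

lemma Rs_le: "card (Rs d m) \<le> card (carrier R) ^ m"
proof -
  have "card (Rs d m) \<le> card (monic_polys_deg R m)"
    by (rule card_mono[OF finite_mon]) (auto simp: Rs_def)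
  thus ?thesis using card_mon by simp
qed

lemma S_eq:
  assumes "n \<ge> 1"
  shows "{F \<in> monic_polys_deg R n. min_irred_factor_deg R F \<ge> d} = Rs d n"
proof -
  have "min_irred_factor_deg R F \<ge> d \<longleftrightarrow> rough d F" if F: "F \<in> monic_polys_deg R n" for F
  proof -
    have Fm: "monic_poly R F" "degree F = n" using F unfolding monic_polys_deg_def by auto
    define D where "D = {degree P | P. monic_poly R P \<and> pirreducible (carrier R) P \<and> P pdivides F}"
    have "D \<noteq> {}" using exists_monic_irred[OF Fm(1)] Fm(2) assms unfolding D_def by auto
    moreover have "finite D"
    proof (rule finite_subset)
      show "D \<subseteq> {..n}" unfolding D_def using monic_dvd_deg[OF _ Fm(1)] Fm(2) by auto
    qed simp
    ultimately have e0: "d \<le> Min D \<longleftrightarrow> (\<forall>x\<in>D. d \<le> x)" by simp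
    have e1: "min_irred_factor_deg R F = Min D" unfolding min_irred_factor_deg_def D_def by simp
    have e2: "(\<forall>x\<in>D. d \<le> x) \<longleftrightarrow> rough d F" unfolding D_def rough_def by auto
    show ?thesis using e0 e1 e2 by simp
  qed
  thus ?thesis unfolding Rs_def by auto
qed

lemma G_ff: "n \<ge> 1 \<Longrightarrow> (\<Sum>k\<in>{1..n}. if k dvd n then k * card (Irr k) else 0) = card (carrier R) ^ n"
proof (rule gauss_abstract)
  fix m
  show "m * card (carrier R) ^ m = (\<Sum>k\<in>{1..m}. card (Irr k) * (k * (\<Sum>j\<in>{1..m div k}. card (carrier R) ^ (m - j*k))))"
    using ident[of 1 m] unfolding Rs1 card_mon by simp
qed

lemma abs_ok: "d \<ge> 1 \<Longrightarrow> abs_setup (card (carrier R)) (\<lambda>k. card (Irr k)) (\<lambda>m. card (Rs d m)) d"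
  by (unfold_locales) (use q_ge2 G_ff ident Rs0 Rs_le in auto)

end

theorem mainTheorem10:
  shows "\<exists>(c1::real) (c2::real) (N::real). c1 > 0 \<and> c2 > 0 \<and>
    (\<forall>(R :: nat ring) (n::nat) (d::nat).
       field R \<longrightarrow> finite (carrier R) \<longrightarrow> 1 \<le> d \<longrightarrow> d \<le> n \<longrightarrow>
       real (card (carrier R)) ^ n \<ge> N \<longrightarrow>
       (let q = real (card (carrier R));
            S = {F \<in> monic_polys_deg R n. min_irred_factor_deg R F \<ge> d}
        in c1 * q ^ n / real d \<le> real (card S) \<and> real (card S) \<le> c2 * q ^ n / real d))"
proof (intro exI conjI allI impI)
  show "(1/12::real) > 0" by simp
  show "(5::real) > 0" by simp
  fix R :: "nat ring" and n d :: nat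
  assume f: "field R" and fc: "finite (carrier R)" and d: "1 \<le> d" and dn: "d \<le> n"
  interpret ffield R using f fc by (simp add: ffield_def ffield_axioms_def)
  interpret A: abs_setup "card (carrier R)" "\<lambda>k. card (Irr k)" "\<lambda>m. card (Rs d m)" d
    by (rule abs_ok[OF d])
  have S: "{F \<in> monic_polys_deg R n. min_irred_factor_deg R F \<ge> d} = Rs d n"
    using S_eq dn d by simp
  have l: "real (card (carrier R)) ^ n / (12 * real d) \<le> real (card (Rs d n))" using A.lb[OF dn] .
  have u: "real (card (Rs d n)) \<le> 5 * real (card (carrier R)) ^ n / real d" using A.ub dn d by simp
  show "let q = real (card (carrier R));
            S = {F \<in> monic_polys_deg R n. min_irred_factor_deg R F \<ge> d}
        in 1/12 * q ^ n / real d \<le> real (card S) \<and> real (card S) \<le> 5 * q ^ n / real d"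
    unfolding Let_def S using l u by simp
qed

end
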